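(* Let $k\ge1$ be odd, $\omega=\frac{1+\sqrt{-7}}{2}$, and with $S=\begin{psmallmatrix}0&-1\\1&0\end{psmallmatrix}$, $T=\begin{psmallmatrix}1&1\\0&1\end{psmallmatrix}$, $T_\omega=\begin{psmallmatrix}1&\omega\\0&1\end{psmallmatrix}$, $U=TS$, let $W_{k,k}=\ker(\mathbf{1}+S)\cap\ker(\mathbf{1}+U+U^2)\cap\ker(T+ST_\omega+T_\omega ST+ST_\omega^{-1}ST_\omega)$. Let $\varepsilon=\begin{psmallmatrix}-1&0\\0&1\end{psmallmatrix}$, so $P|\varepsilon=P(-z,-\bar z)$. Then $W_{k,k}|\varepsilon=W_{k,k}$, and hence $W_{k,k}=W_{k,k}^1\oplus W_{k,k}^{-1}$, where $W_{k,k}^{\pm1}=W_{k,k}\cap\{P\in V_{k,k}:P(-z,-\bar z)=\pm P(z,\bar z)\}$.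
   Context: $V_{k,k}$: polynomials $\sum_{0\le i,j\le k}c_{ij}z^i\bar z^j$ over $\mathbb{C}$ with right action $(P|\gamma)(z,\bar z)=(cz+e)^k\overline{(cz+e)}^kP\!\left(\frac{az+b}{cz+e},\frac{\bar a\bar z+\bar b}{\bar c\bar z+\bar e}\right)$ for $\gamma=\begin{psmallmatrix}a&b\\c&e\end{psmallmatrix}$, extended linearly; $\ker(X)=\{P:P|X=0\}$; $W|\varepsilon=\{P|\varepsilon:P\in W\}$. *)

theory Defs
  imports Complex_Main "HOL-Computational_Algebra.Polynomial"
begin

text \<open>A polynomial P(z, zbar) = sum c_ij z^i zbar^j is represented as a bivariate
  polynomial of type complex poly poly: the outer variable stands for zbar,
  the inner (coefficient) variable for z. So coeff (coeff P j) i = c_ij.\<close>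

definition Vkk :: "nat \<Rightarrow> complex poly poly set" where
  "Vkk k = {P. degree P \<le> k \<and> (\<forall>j. degree (coeff P j) \<le> k)}"

definition ev2 :: "complex poly poly \<Rightarrow> complex \<Rightarrow> complex \<Rightarrow> complex" where
  "ev2 P z w = poly (map_poly (\<lambda>q. poly q z) P) w"

text \<open>2x2 complex matrices (a, b, c, e) = [[a, b], [c, e]].\<close>
type_synonym mat2 = "complex \<times> complex \<times> complex \<times> complex"

definition mmul :: "mat2 \<Rightarrow> mat2 \<Rightarrow> mat2" where
  "mmul A B = (case A of (a, b, c, e) \<Rightarrow> case B of (a', b', c', e') \<Rightarrow>
     (a*a' + b*c', a*b' + b*e', c*a' + e*c', c*b' + e*e'))"

text \<open>The slash action (P|gamma)(z,zbar) = (cz+e)^k conj(cz+e)^k P((az+b)/(cz+e), conj(..)),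
  written without denominators: for P in V_{k,k} this equals
  sum_{i,j} c_ij (az+b)^i (cz+e)^(k-i) (conj a zbar + conj b)^j (conj c zbar + conj e)^(k-j).\<close>
definition slash :: "nat \<Rightarrow> complex poly poly \<Rightarrow> mat2 \<Rightarrow> complex poly poly" where
  "slash k P g = (case g of (a, b, c, e) \<Rightarrow>
     (\<Sum>j\<le>k. \<Sum>i\<le>k.
        smult (smult (coeff (coeff P j) i) ([:b, a:] ^ i * [:e, c:] ^ (k - i)))
          ([:[:cnj b:], [:cnj a:]:] ^ j * [:[:cnj e:], [:cnj c:]:] ^ (k - j))))"

text \<open>Action of a group ring element given as a list of matrices, each with coefficient 1.\<close>
definition slash_sum :: "nat \<Rightarrow> complex poly poly \<Rightarrow> mat2 list \<Rightarrow> complex poly poly" where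
  "slash_sum k P Xs = sum_list (map (slash k P) Xs)"

definition kerX :: "nat \<Rightarrow> mat2 list \<Rightarrow> complex poly poly set" where
  "kerX k Xs = {P \<in> Vkk k. slash_sum k P Xs = 0}"

definition omega :: complex where "omega = Complex (1/2) (sqrt 7 / 2)"

definition I2 :: mat2 where "I2 = (1, 0, 0, 1)"
definition Smat :: mat2 where "Smat = (0, -1, 1, 0)"
definition Tmat :: mat2 where "Tmat = (1, 1, 0, 1)"
definition Tw :: mat2 where "Tw = (1, omega, 0, 1)"
definition Twinv :: mat2 where "Twinv = (1, -omega, 0, 1)"
definition Umat :: mat2 where "Umat = mmul Tmat Smat"
definition epsmat :: mat2 where "epsmat = (-1, 0, 0, 1)"

definition Wkk :: "nat \<Rightarrow> complex poly poly set" where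
  "Wkk k = kerX k [I2, Smat]
         \<inter> kerX k [I2, Umat, mmul Umat Umat]
         \<inter> kerX k [Tmat, mmul Smat Tw, mmul (mmul Tw Smat) Tmat,
                    mmul (mmul (mmul Smat Twinv) Smat) Tw]"

definition Wpm :: "nat \<Rightarrow> complex \<Rightarrow> complex poly poly set" where
  "Wpm k s = Wkk k \<inter> {P \<in> Vkk k. \<forall>z w. ev2 P (-z) (-w) = s * ev2 P z w}"

end

theory Submission
  imports Defs
begin

lemma ev2_alt: "ev2 P z w = poly (poly P [:w:]) z"
  unfolding ev2_def
proof (induction P rule: pCons_induct)
  case 0 then show ?case by simp
next
  case (pCons a p)
  then show ?case by (simp add: map_poly_pCons algebra_simps)
qed

lemma poly2_eq0:
  fixes P :: "complex poly poly"
  assumes "\<And>z w. z \<noteq> z0 \<Longrightarrow> w \<noteq> w0 \<Longrightarrow> ev2 P z w = 0"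
  shows "P = 0"
proof -
  have inf: "infinite (UNIV - {x::complex})" for x
    by (simp add: infinite_UNIV_char_0)
  have A: "poly P [:w:] = 0" if "w \<noteq> w0" for w
  proof (rule ccontr)
    assume "poly P [:w:] \<noteq> 0"
    then have "finite {z. poly (poly P [:w:]) z = 0}" by (rule poly_roots_finite)
    moreover have "UNIV - {z0} \<subseteq> {z. poly (poly P [:w:]) z = 0}"
      using assms that by (auto simp: ev2_alt)
    ultimately show False using inf finite_subset by blast
  qed
  show ?thesis
  proof (rule ccontr)
    assume "P \<noteq> 0"
    then have "finite {x. poly P x = 0}" by (rule poly_roots_finite)
    moreover have "(\<lambda>w. [:w:]) ` (UNIV - {w0}) \<subseteq> {x. poly P x = 0}"
      using A by auto
    moreover have "infinite ((\<lambda>w. [:w:]) ` (UNIV - {w0}))"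
      using inf by (subst finite_image_iff) (auto simp: inj_on_def)
    ultimately show False using finite_subset by blast
  qed
qed

lemma ev2_diff: "ev2 (P - Q) z w = ev2 P z w - ev2 Q z w"
  by (simp add: ev2_alt)

lemma ev2_inj:
  assumes "\<And>z w. ev2 P z w = ev2 Q z w" shows "P = Q"
proof -
  have "P - Q = 0" by (rule poly2_eq0[of 0 0]) (simp add: ev2_diff assms)
  then show ?thesis by simp
qed

definition Hk :: "nat \<Rightarrow> complex poly poly \<Rightarrow> complex \<Rightarrow> complex \<Rightarrow> complex \<Rightarrow> complex \<Rightarrow> complex" where
  "Hk k P x1 x2 y1 y2 = (\<Sum>j\<le>k. \<Sum>i\<le>k. coeff (coeff P j) i * x1^i * x2^(k-i) * y1^j * y2^(k-j))"

lemma ev2_slash: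
  "ev2 (slash k P (a,b,c,e)) z w = Hk k P (a*z+b) (c*z+e) (cnj a*w + cnj b) (cnj c*w + cnj e)"
  unfolding slash_def Hk_def ev2_alt
  by (simp add: poly_sum algebra_simps)

lemma poly_le_sum:
  fixes p :: "'a::comm_ring_1 poly"
  assumes "degree p \<le> k" shows "poly p x = (\<Sum>i\<le>k. coeff p i * x^i)"
proof -
  have "poly p x = (\<Sum>i\<le>degree p. coeff p i * x^i)" by (rule poly_altdef)
  also have "\<dots> = (\<Sum>i\<le>k. coeff p i * x^i)"
    using assms by (intro sum.mono_neutral_left) (auto simp: coeff_eq_0)
  finally show ?thesis .
qed

lemma ev2_Hk:
  assumes "P \<in> Vkk k" shows "ev2 P x y = Hk k P x 1 y 1"
proof -
  have d: "degree P \<le> k" "\<And>j. degree (coeff P j) \<le> k" using assms by (auto simp: Vkk_def)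
  have "ev2 P x y = poly (\<Sum>j\<le>k. coeff P j * [:y:]^j) x"
    unfolding ev2_alt by (subst poly_le_sum[OF d(1)]) simp
  also have "\<dots> = (\<Sum>j\<le>k. poly (coeff P j) x * y^j)"
    by (simp add: poly_sum)
  also have "\<dots> = (\<Sum>j\<le>k. (\<Sum>i\<le>k. coeff (coeff P j) i * x^i) * y^j)"
    by (subst poly_le_sum[OF d(2)]) simp
  also have "\<dots> = Hk k P x 1 y 1"
    unfolding Hk_def by (simp add: sum_distrib_right)
  finally show ?thesis .
qed

lemma Hk_homog:
  "Hk k P (l*u1) (l*u2) (m*v1) (m*v2) = l^k * m^k * Hk k P u1 u2 v1 v2"
proof -
  have pl: "l^i * l^(k-i) = l^k" if "i \<le> k" for i and l :: complex
    using that by (simp add: power_add[symmetric])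
  have "Hk k P (l*u1) (l*u2) (m*v1) (m*v2) =
     (\<Sum>j\<le>k. \<Sum>i\<le>k. (l^i * l^(k-i)) * (m^j * m^(k-j)) * (coeff (coeff P j) i * u1^i * u2^(k-i) * v1^j * v2^(k-j)))"
    unfolding Hk_def by (simp add: power_mult_distrib algebra_simps)
  also have "\<dots> = (\<Sum>j\<le>k. \<Sum>i\<le>k. l^k * m^k * (coeff (coeff P j) i * u1^i * u2^(k-i) * v1^j * v2^(k-j)))"
    by (intro sum.cong refl) (simp add: pl)
  also have "\<dots> = l^k * m^k * Hk k P u1 u2 v1 v2"
    unfolding Hk_def by (simp add: sum_distrib_left)
  finally show ?thesis .
qed


definition cc :: "complex poly poly \<Rightarrow> bool" where
  "cc Q \<longleftrightarrow> (\<forall>n. degree (coeff Q n) = 0)"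

lemma cc_mult: assumes "cc P" "cc Q" shows "cc (P * Q)"
  unfolding cc_def
proof
  fix n
  have "degree (coeff (P*Q) n) \<le> 0"
    unfolding coeff_mult
  proof (rule degree_sum_le)
    fix i
    show "degree (coeff P i * coeff Q (n - i)) \<le> 0"
      using degree_mult_le[of "coeff P i" "coeff Q (n-i)"] assms by (simp add: cc_def)
  qed simp
  then show "degree (coeff (P*Q) n) = 0" by simp
qed

lemma cc_power: "cc P \<Longrightarrow> cc (P ^ n)"
proof (induction n)
  case 0 then show ?case by (simp add: cc_def coeff_1)
next
  case (Suc n) then show ?case unfolding power_Suc by (intro cc_mult)
qed

lemma cc_lin: "cc [:[:x:], [:y:]:]"
  by (auto simp: cc_def coeff_pCons split: nat.splits)

lemma slash_V: "slash k P g \<in> Vkk k"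
proof -
  obtain a b c e where g: "g = (a,b,c,e)" by (cases g) auto
  define B where "B j = ([:[:cnj b:], [:cnj a:]:] ^ j * [:[:cnj e:], [:cnj c:]:] ^ (k - j))" for j
  define A where "A i = [:b, a:] ^ i * [:e, c:] ^ (k - i)" for i
  have s: "slash k P g = (\<Sum>j\<le>k. \<Sum>i\<le>k. smult (smult (coeff (coeff P j) i) (A i)) (B j))"
    unfolding slash_def g A_def B_def by simp
  have ccB: "cc (B j)" for j unfolding B_def by (intro cc_mult cc_power cc_lin)
  have dB: "degree (B j) \<le> k" if "j \<le> k" for j
  proof -
    have "degree (B j) \<le> degree ([:[:cnj b:], [:cnj a:]:] ^ j) + degree ([:[:cnj e:], [:cnj c:]:] ^ (k - j))"
      unfolding B_def by (rule degree_mult_le)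
    also have "\<dots> \<le> 1 * j + 1 * (k - j)"
      by (intro add_mono order_trans[OF degree_power_le] mult_right_mono) auto
    finally show ?thesis using that by simp
  qed
  have dA: "degree (A i) \<le> k" if "i \<le> k" for i
  proof -
    have "degree (A i) \<le> degree ([:b, a:] ^ i) + degree ([:e, c:] ^ (k - i))"
      unfolding A_def by (rule degree_mult_le)
    also have "\<dots> \<le> 1 * i + 1 * (k - i)"
      by (intro add_mono order_trans[OF degree_power_le] mult_right_mono) auto
    finally show ?thesis using that by simp
  qed
  have "degree (slash k P g) \<le> k"
    unfolding s
    by (intro degree_sum_le finite_atMost order_trans[OF degree_smult_le]) (auto intro: dB)
  moreover have "degree (coeff (slash k P g) n) \<le> k" for n
  proof -
    have "coeff (slash k P g) n = (\<Sum>j\<le>k. \<Sum>i\<le>k. smult (coeff (coeff P j) i) (A i) * coeff (B j) n)"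
      unfolding s by (simp add: coeff_sum)
    also have "degree \<dots> \<le> k"
    proof (intro degree_sum_le finite_atMost)
      fix j i assume "j \<in> {..k}" "i \<in> {..k}"
      have "degree (smult (coeff (coeff P j) i) (A i) * coeff (B j) n) \<le> degree (smult (coeff (coeff P j) i) (A i)) + degree (coeff (B j) n)"
        by (rule degree_mult_le)
      also have "\<dots> \<le> k" using ccB[of j] dA[of i] \<open>i \<in> {..k}\<close> degree_smult_le[of "coeff (coeff P j) i" "A i"]
        by (simp add: cc_def)
      finally show "degree (smult (coeff (coeff P j) i) (A i) * coeff (B j) n) \<le> k" .
    qed
    finally show ?thesis .
  qed
  ultimately show ?thesis by (simp add: Vkk_def)
qed

lemma slash_comp:
  assumes P: "P \<in> Vkk k" and h: "c' \<noteq> 0 \<or> e' \<noteq> 0"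
  shows "slash k (slash k P (a,b,c,e)) (a',b',c',e') = slash k P (mmul (a,b,c,e) (a',b',c',e'))"
proof -
  define z0 where "z0 = (if c' \<noteq> 0 then - e' / c' else 0)"
  have "slash k (slash k P (a,b,c,e)) (a',b',c',e') - slash k P (mmul (a,b,c,e) (a',b',c',e')) = 0"
  proof (rule poly2_eq0[of z0 "cnj z0"])
    fix z w assume z: "z \<noteq> z0" and w: "w \<noteq> cnj z0"
    define x1 where "x1 = a'*z+b'"
    define x2 where "x2 = c'*z+e'"
    define y1 where "y1 = cnj a'*w+cnj b'"
    define y2 where "y2 = cnj c'*w+cnj e'"
    have x2: "x2 \<noteq> 0"
    proof
      assume x20: "x2 = 0"
      show False
      proof (cases "c' = 0")
        case True then show False using h x20 by (simp add: x2_def)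
      next
        case False
        then have "z = - e' / c'" using x20 unfolding x2_def
          by (simp add: eq_divide_eq add_eq_0_iff2 mult.commute) (simp add: field_simps)
        then show False using z False by (simp add: z0_def)
      qed
    qed
    have y2: "y2 \<noteq> 0"
    proof
      assume "y2 = 0"
      then have "cnj y2 = 0" by simp
      then have "c' * cnj w + e' = 0" unfolding y2_def by simp
      then have "cnj w = z0" using h unfolding z0_def
        by (auto split: if_splits simp: field_simps add_eq_0_iff2 add.commute)
      then show False using w by auto
    qed
    have "ev2 (slash k (slash k P (a,b,c,e)) (a',b',c',e')) z w = Hk k (slash k P (a,b,c,e)) x1 x2 y1 y2"
      unfolding ev2_slash x1_def x2_def y1_def y2_def ..
    also have "\<dots> = Hk k (slash k P (a,b,c,e)) (x2 * (x1/x2)) (x2 * 1) (y2 * (y1/y2)) (y2 * 1)"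
      using x2 y2 by simp
    also have "\<dots> = x2^k * y2^k * ev2 (slash k P (a,b,c,e)) (x1/x2) (y1/y2)"
      by (simp only: Hk_homog ev2_Hk[OF slash_V])
    also have "\<dots> = x2^k * y2^k * Hk k P (a*(x1/x2)+b) (c*(x1/x2)+e) (cnj a*(y1/y2) + cnj b) (cnj c*(y1/y2) + cnj e)"
      by (simp only: ev2_slash)
    also have "\<dots> = Hk k P (x2*(a*(x1/x2)+b)) (x2*(c*(x1/x2)+e)) (y2*(cnj a*(y1/y2) + cnj b)) (y2*(cnj c*(y1/y2) + cnj e))"
      by (simp only: Hk_homog)
    also have "\<dots> = Hk k P (a*x1+b*x2) (c*x1+e*x2) (cnj a*y1+cnj b*y2) (cnj c*y1+cnj e*y2)"
    proof -
      have "x2*(a*(x1/x2)+b) = a*x1+b*x2" "x2*(c*(x1/x2)+e) = c*x1+e*x2"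
        "y2*(cnj a*(y1/y2) + cnj b) = cnj a*y1+cnj b*y2" "y2*(cnj c*(y1/y2) + cnj e) = cnj c*y1+cnj e*y2"
        using x2 y2 by (simp_all add: field_simps)
      then show ?thesis by simp
    qed
    also have "\<dots> = ev2 (slash k P (mmul (a,b,c,e) (a',b',c',e'))) z w"
      by (simp add: mmul_def ev2_slash x1_def x2_def y1_def y2_def algebra_simps)
    finally show "ev2 (slash k (slash k P (a,b,c,e)) (a',b',c',e') - slash k P (mmul (a,b,c,e) (a',b',c',e'))) z w = 0"
      by (simp add: ev2_diff)
  qed
  then show ?thesis by simp
qed

lemma slash_neg: "slash k P (-a,-b,-c,-e) = slash k P (a,b,c,e)"
proof (rule ev2_inj)
  fix z w
  have "ev2 (slash k P (-a,-b,-c,-e)) z w = Hk k P ((-1)*(a*z+b)) ((-1)*(c*z+e)) ((-1)*(cnj a*w + cnj b)) ((-1)*(cnj c*w + cnj e))"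
    unfolding ev2_slash by (simp add: algebra_simps)
  also have "\<dots> = ev2 (slash k P (a,b,c,e)) z w"
    by (simp only: Hk_homog ev2_slash) (simp add: power_mult_distrib[symmetric])
  finally show "ev2 (slash k P (-a,-b,-c,-e)) z w = ev2 (slash k P (a,b,c,e)) z w" .
qed

lemma slash_I2: "P \<in> Vkk k \<Longrightarrow> slash k P I2 = P"
  by (rule ev2_inj) (simp add: I2_def ev2_slash ev2_Hk)

lemma ev2_eps: "P \<in> Vkk k \<Longrightarrow> ev2 (slash k P epsmat) z w = ev2 P (-z) (-w)"
  by (simp add: epsmat_def ev2_slash ev2_Hk)

lemma Hk_add: "Hk k (P + Q) x1 x2 y1 y2 = Hk k P x1 x2 y1 y2 + Hk k Q x1 x2 y1 y2"
  unfolding Hk_def by (simp add: algebra_simps sum.distrib)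

lemma Hk_smult: "Hk k (smult [:s:] P) x1 x2 y1 y2 = s * Hk k P x1 x2 y1 y2"
  unfolding Hk_def by (simp add: algebra_simps sum_distrib_left)

lemma Hk_uminus: "Hk k (- P) x1 x2 y1 y2 = - Hk k P x1 x2 y1 y2"
  unfolding Hk_def by (simp add: sum_negf[symmetric])

lemma ev2_add: "ev2 (P + Q) z w = ev2 P z w + ev2 Q z w"
  by (simp add: ev2_alt)
lemma ev2_uminus: "ev2 (- P) z w = - ev2 P z w"
  by (simp add: ev2_alt)
lemma ev2_smult: "ev2 (smult [:s:] P) z w = s * ev2 P z w"
  by (simp add: ev2_alt)
lemma ev2_zero: "ev2 0 z w = 0"
  by (simp add: ev2_alt)

lemma slash_add: "slash k (P + Q) g = slash k P g + slash k Q g"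
  by (cases g, rule ev2_inj) (simp add: ev2_slash ev2_add Hk_add)
lemma slash_uminus: "slash k (- P) g = - slash k P g"
  by (cases g, rule ev2_inj) (simp add: ev2_slash ev2_uminus Hk_uminus)
lemma slash_smult: "slash k (smult [:s:] P) g = smult [:s:] (slash k P g)"
  by (cases g, rule ev2_inj) (simp add: ev2_slash ev2_smult Hk_smult)
lemma slash_zero: "slash k 0 g = 0"
  by (cases g) (simp add: slash_def)


definition lowok :: "mat2 \<Rightarrow> bool" where
  "lowok g = (case g of (a,b,c,e) \<Rightarrow> c \<noteq> 0 \<or> e \<noteq> 0)"

definition negm :: "mat2 \<Rightarrow> mat2" where
  "negm g = (case g of (a,b,c,e) \<Rightarrow> (-a,-b,-c,-e))"

definition ce :: "mat2 \<Rightarrow> mat2" where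
  "ce x = mmul (mmul epsmat x) epsmat"

lemma comp': "P \<in> Vkk k \<Longrightarrow> lowok h \<Longrightarrow> slash k (slash k P g) h = slash k P (mmul g h)"
  by (cases g, cases h) (auto simp: lowok_def intro: slash_comp)

lemma neg': "slash k P (negm g) = slash k P g"
  by (cases g) (simp add: negm_def slash_neg)

lemma leftS:
  assumes P: "P \<in> Vkk k" and S: "slash k P Smat = - P" and g: "lowok g"
    and h: "h = mmul Smat g \<or> h = negm (mmul Smat g)"
  shows "slash k P h = - slash k P g"
proof -
  have "slash k P (mmul Smat g) = - slash k P g"
    using comp'[OF P g, of Smat] S by (simp add: slash_uminus)
  then show ?thesis using h neg' by metis
qed

lemma slash_sum_comp:
  assumes "P \<in> Vkk k" "lowok g"
  shows "slash k (slash_sum k P Xs) g = slash_sum k P (map (\<lambda>x. mmul x g) Xs)"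
  unfolding slash_sum_def
  by (induction Xs) (simp_all add: slash_zero slash_add comp'[OF assms])

lemma slash_sum_eps:
  assumes P: "P \<in> Vkk k" and X: "list_all lowok Xs"
  shows "slash_sum k (slash k P epsmat) Xs = slash k (slash_sum k P (map ce Xs)) epsmat"
  using X
proof (induction Xs)
  case Nil then show ?case by (simp add: slash_sum_def slash_zero)
next
  case (Cons x Xs)
  have le: "lowok epsmat" by (simp add: lowok_def epsmat_def)
  have "slash k (slash k P epsmat) x = slash k P (mmul epsmat x)"
    using Cons.prems comp'[OF P] by simp
  also have "\<dots> = slash k P (mmul (ce x) epsmat)"
    by (cases x) (simp add: ce_def mmul_def epsmat_def)
  also have "\<dots> = slash k (slash k P (ce x)) epsmat"
    using comp'[OF P le] by simp
  finally show ?case using Cons by (simp add: slash_sum_def slash_add)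
qed

lemma ker_eps:
  assumes P: "P \<in> Vkk k" and X: "list_all lowok Xs" and z: "slash_sum k P (map ce Xs) = 0"
  shows "slash k P epsmat \<in> kerX k Xs"
  using slash_sum_eps[OF P X] z slash_V by (simp add: kerX_def slash_zero)

lemma omega_nz: "omega \<noteq> 0"
  by (simp add: omega_def complex_eq_iff)

lemma W_eps:
  assumes W: "P \<in> Wkk k"
  shows "slash k P epsmat \<in> Wkk k"
proof -
  define U where "U = mmul Tmat Smat"
  define UU where "UU = mmul U U"
  define G :: mat2 where "G = (1, -1-omega, 0, 1)"
  have P: "P \<in> Vkk k" using W by (simp add: Wkk_def kerX_def)
  have h1: "P + slash k P Smat = 0"
    using W P by (simp add: Wkk_def kerX_def slash_sum_def slash_I2)
  then have hS: "slash k P Smat = - P" by (simp add: eq_neg_iff_add_eq_0 add.commute)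
  have h2: "slash k P U + slash k P UU = - P"
    using W P by (simp add: Wkk_def kerX_def slash_sum_def slash_I2 U_def UU_def Umat_def eq_neg_iff_add_eq_0 add.commute add.left_commute)
  have Uv: "U = (1,-1,1,0)" "UU = (0,-1,1,-1)"
    by (simp_all add: U_def UU_def mmul_def Tmat_def Smat_def)
  have lS: "lowok Smat" by (simp add: lowok_def Smat_def)
  have k1: "P \<in> kerX k [I2, Smat]"
    using W by (simp add: Wkk_def)
  have g1: "slash_sum k P (map ce [I2, Smat]) = 0"
  proof -
    have "map ce [I2, Smat] = [I2, negm Smat]"
      by (simp add: ce_def mmul_def epsmat_def I2_def Smat_def negm_def)
    then show ?thesis using h1 by (simp add: slash_sum_def neg' slash_I2 P)
  qed
  have g2: "slash_sum k P (map ce [I2, Umat, mmul Umat Umat]) = 0"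
  proof -
    have m: "map ce [I2, Umat, mmul Umat Umat] = [I2, (1,1,-1,0), (0,1,-1,-1)]"
      by (simp add: ce_def mmul_def epsmat_def I2_def Smat_def Umat_def Tmat_def)
    have "slash k P (1,1,-1,0) = - slash k P (mmul UU Smat)"
      by (rule leftS[OF P hS]) (simp_all add: Uv lowok_def Smat_def mmul_def)
    also have "\<dots> = - slash k (slash k P UU) Smat" using comp'[OF P lS] by simp
    finally have e1: "slash k P (1,1,-1,0) = - slash k (slash k P UU) Smat" .
    have "slash k P (0,1,-1,-1) = - slash k P (mmul U Smat)"
      by (rule leftS[OF P hS]) (simp_all add: Uv lowok_def Smat_def mmul_def)
    also have "\<dots> = - slash k (slash k P U) Smat" using comp'[OF P lS] by simp
    finally have e2: "slash k P (0,1,-1,-1) = - slash k (slash k P U) Smat" .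
    have "slash k (slash k P U) Smat + slash k (slash k P UU) Smat = slash k (- P) Smat"
      using h2 by (simp add: slash_add[symmetric])
    then have "slash k (slash k P U) Smat + slash k (slash k P UU) Smat = P"
      using hS by (simp add: slash_uminus)
    then show ?thesis unfolding m using e1 e2
      by (simp add: slash_sum_def slash_I2 P algebra_simps)
  qed
  define X3 where "X3 = [Tmat, mmul Smat Tw, mmul (mmul Tw Smat) Tmat,
                    mmul (mmul (mmul Smat Twinv) Smat) Tw]"
  have h3: "slash_sum k P X3 = 0" using W by (simp add: Wkk_def kerX_def X3_def)
  have lG: "lowok G" by (simp add: lowok_def G_def)
  define A1 :: mat2 where "A1 = (1,-omega,0,1)"
  define A2 :: mat2 where "A2 = (0,-1,1,-1)"
  define A3 :: mat2 where "A3 = (omega, -omega*omega-1, 1, -omega)"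
  define A4 :: mat2 where "A4 = (-1, 1, -omega, omega-1)"
  have mA: "map (\<lambda>x. mmul x G) X3 = [A1, A2, A3, A4]"
    by (simp add: X3_def A1_def A2_def A3_def A4_def G_def mmul_def Tmat_def Smat_def Tw_def Twinv_def algebra_simps power2_eq_square)
  have hA: "slash k P A1 + slash k P A2 + slash k P A3 + slash k P A4 = 0"
    using slash_sum_comp[OF P lG, of X3] h3 unfolding mA by (simp add: slash_zero slash_sum_def add.assoc)
  have mB: "map ce X3 = [negm (mmul Smat A2), negm (mmul Smat A1), mmul Smat A4, mmul Smat A3]"
    by (simp add: X3_def A1_def A2_def A3_def A4_def ce_def epsmat_def negm_def mmul_def Tmat_def Smat_def Tw_def Twinv_def algebra_simps power2_eq_square)
  have lA: "lowok A1" "lowok A2" "lowok A3" "lowok A4"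
    by (simp_all add: lowok_def A1_def A2_def A3_def A4_def omega_nz)
  have g3: "slash_sum k P (map ce X3) = 0"
    unfolding mB slash_sum_def
    using leftS[OF P hS lA(1)] leftS[OF P hS lA(2)] leftS[OF P hS lA(3)] leftS[OF P hS lA(4)] hA
    by (simp add: algebra_simps) (metis add.commute add.left_commute neg_eq_iff_add_eq_0 add.assoc)
  have lX: "list_all lowok [I2, Smat]" "list_all lowok [I2, Umat, mmul Umat Umat]" "list_all lowok X3"
    by (simp_all add: X3_def lowok_def I2_def Smat_def Umat_def Tmat_def Tw_def Twinv_def mmul_def omega_nz)
  show ?thesis
    using ker_eps[OF P lX(1) g1] ker_eps[OF P lX(2) g2] ker_eps[OF P lX(3) g3]
    by (simp add: Wkk_def X3_def)
qed


lemma V_lin: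
  assumes "P \<in> Vkk k" "Q \<in> Vkk k"
  shows "smult [:s:] P + smult [:t:] Q \<in> Vkk k"
proof -
  have "degree (smult [:s:] P + smult [:t:] Q) \<le> k"
    using assms by (intro degree_add_le order_trans[OF degree_smult_le]) (auto simp: Vkk_def)
  moreover have "degree (coeff (smult [:s:] P + smult [:t:] Q) j) \<le> k" for j
  proof -
    have "coeff (smult [:s:] P + smult [:t:] Q) j = smult s (coeff P j) + smult t (coeff Q j)"
      by simp
    also have "degree \<dots> \<le> k"
      using assms by (intro degree_add_le order_trans[OF degree_smult_le]) (auto simp: Vkk_def)
    finally show ?thesis .
  qed
  ultimately show ?thesis by (simp add: Vkk_def)
qed

lemma slash_sum_lin:
  "slash_sum k (smult [:s:] P + smult [:t:] Q) Xs = smult [:s:] (slash_sum k P Xs) + smult [:t:] (slash_sum k Q Xs)"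
  unfolding slash_sum_def
  by (induction Xs) (simp_all add: slash_add slash_smult algebra_simps smult_add_right)

lemma ker_lin:
  "P \<in> kerX k Xs \<Longrightarrow> Q \<in> kerX k Xs \<Longrightarrow> smult [:s:] P + smult [:t:] Q \<in> kerX k Xs"
  by (simp add: kerX_def V_lin slash_sum_lin)

lemma W_lin:
  "P \<in> Wkk k \<Longrightarrow> Q \<in> Wkk k \<Longrightarrow> smult [:s:] P + smult [:t:] Q \<in> Wkk k"
  by (simp add: Wkk_def ker_lin)

lemma smult_one': "smult [:1:] (P::complex poly poly) = P"
  by (simp only: one_pCons[symmetric] smult_1_left)

lemma W_V: "P \<in> Wkk k \<Longrightarrow> P \<in> Vkk k"
  by (simp add: Wkk_def kerX_def)

theorem proposition5p14:
  fixes k :: nat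
  assumes "k \<ge> 1" and "odd k"
  shows "(\<lambda>P. slash k P epsmat) ` Wkk k = Wkk k
    \<and> Wkk k = {P + Q | P Q. P \<in> Wpm k 1 \<and> Q \<in> Wpm k (-1)}
    \<and> Wpm k 1 \<inter> Wpm k (-1) = {0}"
proof (intro conjI)
  have le: "lowok epsmat" by (simp add: lowok_def epsmat_def)
  show "(\<lambda>P. slash k P epsmat) ` Wkk k = Wkk k"
  proof
    show "(\<lambda>P. slash k P epsmat) ` Wkk k \<subseteq> Wkk k" using W_eps by auto
    show "Wkk k \<subseteq> (\<lambda>P. slash k P epsmat) ` Wkk k"
    proof
      fix P assume P: "P \<in> Wkk k"
      have "slash k (slash k P epsmat) epsmat = slash k P (mmul epsmat epsmat)"
        using comp'[OF W_V[OF P] le] by simp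
      also have "\<dots> = P" using slash_I2[OF W_V[OF P]]
        by (simp add: mmul_def epsmat_def I2_def)
      finally show "P \<in> (\<lambda>P. slash k P epsmat) ` Wkk k"
        using W_eps[OF P] by (metis image_eqI)
    qed
  qed
  show "Wkk k = {P + Q | P Q. P \<in> Wpm k 1 \<and> Q \<in> Wpm k (-1)}"
  proof
    show "Wkk k \<subseteq> {P + Q | P Q. P \<in> Wpm k 1 \<and> Q \<in> Wpm k (-1)}"
    proof
      fix P assume P: "P \<in> Wkk k"
      have PV: "P \<in> Vkk k" using W_V[OF P] .
      define Q1 where "Q1 = smult [:1/2:] P + smult [:1/2:] (slash k P epsmat)"
      define Q2 where "Q2 = smult [:1/2:] P + smult [:-1/2:] (slash k P epsmat)"
      have W1: "Q1 \<in> Wkk k" "Q2 \<in> Wkk k"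
        unfolding Q1_def Q2_def using W_lin P W_eps[OF P] by auto
      have "Q1 \<in> Wpm k 1"
        using W1 W_V[OF W1(1)] unfolding Wpm_def Q1_def
        by (simp add: ev2_add ev2_smult ev2_eps PV algebra_simps)
      moreover have "Q2 \<in> Wpm k (-1)"
        using W1 W_V[OF W1(2)] unfolding Wpm_def Q2_def
        by (simp add: ev2_add ev2_smult ev2_eps PV algebra_simps)
      moreover have "P = Q1 + Q2"
        by (rule ev2_inj) (unfold Q1_def Q2_def ev2_add ev2_smult, simp add: field_simps)
      ultimately show "P \<in> {P + Q | P Q. P \<in> Wpm k 1 \<and> Q \<in> Wpm k (-1)}" by blast
    qed
    show "{P + Q | P Q. P \<in> Wpm k 1 \<and> Q \<in> Wpm k (-1)} \<subseteq> Wkk k"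
      using W_lin[of _ k _ 1 1] by (auto simp: Wpm_def smult_one')
  qed
  show "Wpm k 1 \<inter> Wpm k (-1) = {0}"
  proof
    show "Wpm k 1 \<inter> Wpm k (-1) \<subseteq> {0}"
    proof
      fix P assume "P \<in> Wpm k 1 \<inter> Wpm k (-1)"
      then have "ev2 P z w = 0" for z w by (auto simp: Wpm_def)
      then have "P = 0" by (intro ev2_inj) (simp add: ev2_zero)
      then show "P \<in> {0}" by simp
    qed
    have z: "(0::complex poly poly) \<in> kerX k Xs" for Xs
    proof -
      have "slash k 0 = (\<lambda>_. 0)" by (rule ext) (simp add: slash_zero)
      then show ?thesis unfolding kerX_def slash_sum_def by (simp add: Vkk_def)
    qed
    show "{0} \<subseteq> Wpm k 1 \<inter> Wpm k (-1)"
      by (simp add: Wpm_def Wkk_def z ev2_zero Vkk_def)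
  qed
qed

end
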